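(* Let $m\in[1,+\infty)$. There is a constant $C>1$ such that for all $p=(z,t)$, $q=(\zeta,\tau)\in\mathbb R^3$, $$C^{-1}\delta(p,q)\le d(p,q)\le C\,\delta(p,q),$$ where $$\delta((z,t),(\zeta,\tau))=|z-\zeta|+\min\Big\{|v|^{\frac1{2m+2}},\ \frac{|v|^{1/2}}{|z|^m}\Big\},\qquad v=\tau-t+|z|^{2m}\omega(z,\zeta),$$ with $\omega(z,\zeta)=x\eta-y\xi$ for $z=(x,y)$, $\zeta=(\xi,\eta)$, and with the convention $|v|^{1/2}/|z|^m=+\infty$ when $z=0$ and $v\neq 0$ (and $=0$ when $v=0$).
   Context: Write points of $\mathbb R^3=\mathbb C\times\mathbb R$ as $(z,t)=(x,y,t)$. For a real parameter $m\ge1$ consider the vector fields $X=\partial_x+|z|^{2m}y\,\partial_t$ and $Y=\partial_y-|z|^{2m}x\,\partial_t$. An absolutely continuous curve $\gamma:[0,1]\to\mathbb R^3$ is horizontal if $\dot\gamma(s)=\alpha(s)X(\gamma(s))+\beta(s)Y(\gamma(s))$ for a.e. $s$, with length $\int_0^1|(\alpha(s),\beta(s))|\,ds$; the Carnot–Carathéodory distance $d(p,q)$ is the infimum of lengths of horizontal curves joining $p$ to $q$. *)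

theory Defs
  imports "HOL-Analysis.Analysis"
begin

text \<open>Points of R^3 = C x R are triples (x, y, t).\<close>

definition zabs :: "real \<Rightarrow> real \<Rightarrow> real" where
  "zabs x y = sqrt (x\<^sup>2 + y\<^sup>2)"

definition hfield :: "real \<Rightarrow> real \<Rightarrow> real \<Rightarrow> real \<times> real \<times> real \<Rightarrow> real \<times> real \<times> real" where
  "hfield m a b p = (case p of (x, y, t) \<Rightarrow>
      (a, b, (zabs x y) powr (2 * m) * (a * y - b * x)))"

text \<open>Horizontal curve on [0,1] with controls alpha, beta: alpha, beta are integrable
  on [0,1] and gamma is the indefinite integral of alpha X + beta Y along gamma
  (equivalently, gamma is absolutely continuous with the prescribed a.e. derivative).\<close>
definition horizontal ::
  "real \<Rightarrow> (real \<Rightarrow> real \<times> real \<times> real) \<Rightarrow> (real \<Rightarrow> real) \<Rightarrow> (real \<Rightarrow> real) \<Rightarrow> bool" where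
  "horizontal m \<gamma> a b \<longleftrightarrow>
     a absolutely_integrable_on {0..1} \<and> b absolutely_integrable_on {0..1} \<and>
     (\<forall>s\<in>{0..1}. ((\<lambda>r. hfield m (a r) (b r) (\<gamma> r)) has_integral (\<gamma> s - \<gamma> 0)) {0..s})"

definition hlength :: "(real \<Rightarrow> real) \<Rightarrow> (real \<Rightarrow> real) \<Rightarrow> real" where
  "hlength a b = integral {0..1} (\<lambda>s. sqrt ((a s)\<^sup>2 + (b s)\<^sup>2))"

definition cc_dist :: "real \<Rightarrow> real \<times> real \<times> real \<Rightarrow> real \<times> real \<times> real \<Rightarrow> real" where
  "cc_dist m p q = Inf {hlength a b | \<gamma> a b. horizontal m \<gamma> a b \<and> \<gamma> 0 = p \<and> \<gamma> 1 = q}"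

definition omega :: "real \<times> real \<Rightarrow> real \<times> real \<Rightarrow> real" where
  "omega z w = fst z * snd w - snd z * fst w"

text \<open>The quasi-distance delta; for z = 0 the second term of the min is +infinity
  (or 0 when v = 0, in which case the first term is 0 too).\<close>
definition delta :: "real \<Rightarrow> real \<times> real \<times> real \<Rightarrow> real \<times> real \<times> real \<Rightarrow> real" where
  "delta m p q = (case p of (x, y, t) \<Rightarrow> case q of (\<xi>, \<eta>, \<tau>) \<Rightarrow>
     (let v = \<tau> - t + (zabs x y) powr (2 * m) * omega (x, y) (\<xi>, \<eta>) in
      zabs (x - \<xi>) (y - \<eta>) +
      (if zabs x y = 0 then \<bar>v\<bar> powr (1 / (2 * m + 2))
       else min (\<bar>v\<bar> powr (1 / (2 * m + 2))) (sqrt \<bar>v\<bar> / (zabs x y) powr m))))"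

end

theory Submission
  imports Defs "HOL-Analysis.Analysis"
begin


lemma has_integral_Pair:
  assumes "(f has_integral i) S" "(g has_integral j) S"
  shows "((\<lambda>x. (f x, g x)) has_integral (i, j)) S"
proof -
  have 1: "((\<lambda>x. (f x, 0::'c)) has_integral (i, 0)) S"
    using has_integral_linear[OF assms(1), of "\<lambda>a. (a, 0::'c)"]
    by (simp add: o_def bounded_linear_Pair bounded_linear_ident bounded_linear_zero)
  have 2: "((\<lambda>x. (0::'b, g x)) has_integral (0, j)) S"
    using has_integral_linear[OF assms(2), of "\<lambda>a. (0::'b, a)"]
    by (simp add: o_def bounded_linear_Pair bounded_linear_ident bounded_linear_zero)
  show ?thesis using has_integral_add[OF 1 2] by simp
qed

lemma zabs_norm: "zabs x y = norm (x, y)"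
  by (simp add: zabs_def norm_Pair)

lemma hfield_simp: "hfield m a b (x, y, t) = (a, b, norm (x, y) powr (2 * m) * (a * y - b * x))"
  by (simp add: hfield_def zabs_norm)


lemma has_integral_fst: "(f has_integral i) S \<Longrightarrow> ((\<lambda>x. fst (f x)) has_integral fst i) S"
  using has_integral_linear[of f i S fst] by (simp add: o_def bounded_linear_fst)
lemma has_integral_snd: "(f has_integral i) S \<Longrightarrow> ((\<lambda>x. snd (f x)) has_integral snd i) S"
  using has_integral_linear[of f i S snd] by (simp add: o_def bounded_linear_snd)

definition liftF :: "real \<Rightarrow> (real \<Rightarrow> real \<times> real) \<Rightarrow> (real \<Rightarrow> real \<times> real) \<Rightarrow> real \<Rightarrow> real" where
  "liftF m P P' r = norm (P r) powr (2*m) * (fst (P' r) * snd (P r) - snd (P' r) * fst (P r))"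

lemma lift:
  fixes P P' :: "real \<Rightarrow> real \<times> real"
  assumes der: "\<And>s. (P has_vector_derivative P' s) (at s)" and cont: "continuous_on {0..1} P'"
    and m: "m > 0"
  shows "horizontal m (\<lambda>s. (fst (P s), snd (P s), t0 + integral {0..s} (liftF m P P')))
           (\<lambda>r. fst (P' r)) (\<lambda>r. snd (P' r))"
    and "hlength (\<lambda>r. fst (P' r)) (\<lambda>r. snd (P' r)) = integral {0..1} (\<lambda>r. norm (P' r))"
proof -
  have cP: "continuous_on UNIV P"
    by (metis continuous_at_imp_continuous_on has_vector_derivative_continuous der)
  have cF: "continuous_on {0..1} (liftF m P P')"
    unfolding liftF_def
    by (intro continuous_intros continuous_on_powr' continuous_on_subset[OF cP] cont) (use m in auto)
  have ca: "continuous_on {0..1} (\<lambda>r. fst (P' r))" "continuous_on {0..1} (\<lambda>r. snd (P' r))"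
    by (intro continuous_intros cont)+
  show "horizontal m (\<lambda>s. (fst (P s), snd (P s), t0 + integral {0..s} (liftF m P P')))
           (\<lambda>r. fst (P' r)) (\<lambda>r. snd (P' r))"
    unfolding horizontal_def
  proof (intro conjI ballI)
    show "(\<lambda>r. fst (P' r)) absolutely_integrable_on {0..1}" "(\<lambda>r. snd (P' r)) absolutely_integrable_on {0..1}"
      using ca absolutely_integrable_continuous_real by blast+
    fix s :: real assume s: "s \<in> {0..1}"
    have ftc: "(P' has_integral (P s - P 0)) {0..s}"
      using s by (intro fundamental_theorem_of_calculus) (auto intro: has_vector_derivative_at_within der)
    have i3: "(liftF m P P' has_integral integral {0..s} (liftF m P P')) {0..s}"
      using s by (intro integrable_integral integrable_continuous_real continuous_on_subset[OF cF]) auto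
    have "((\<lambda>r. (fst (P' r), snd (P' r), liftF m P P' r)) has_integral
          (fst (P s - P 0), snd (P s - P 0), integral {0..s} (liftF m P P'))) {0..s}"
      by (intro has_integral_Pair has_integral_fst has_integral_snd ftc i3)
    moreover have "(\<lambda>r. hfield m (fst (P' r)) (snd (P' r))
              (fst (P r), snd (P r), t0 + integral {0..r} (liftF m P P'))) =
          (\<lambda>r. (fst (P' r), snd (P' r), liftF m P P' r))"
      by (simp add: hfield_simp liftF_def)
    ultimately show "((\<lambda>r. hfield m (fst (P' r)) (snd (P' r))
              ((\<lambda>s. (fst (P s), snd (P s), t0 + integral {0..s} (liftF m P P'))) r)) has_integral
          (\<lambda>s. (fst (P s), snd (P s), t0 + integral {0..s} (liftF m P P'))) s -
          (\<lambda>s. (fst (P s), snd (P s), t0 + integral {0..s} (liftF m P P'))) 0) {0..s}"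
      by simp
  qed
  show "hlength (\<lambda>r. fst (P' r)) (\<lambda>r. snd (P' r)) = integral {0..1} (\<lambda>r. norm (P' r))"
    unfolding hlength_def by (simp add: norm_prod_def)
qed


definition J :: "(real \<Rightarrow> 'a::real_vector) \<Rightarrow> (real \<Rightarrow> 'a) \<Rightarrow> real \<Rightarrow> 'a" where
  "J gA gB s = (if s \<le> 1/2 then (2::real) *\<^sub>R gA (2 * s) else (2::real) *\<^sub>R gB (2 * s - 1))"

lemma half1:
  fixes g :: "real \<Rightarrow> 'a::real_normed_vector"
  assumes "(g has_integral I) {0..t}"
  shows "((\<lambda>r. (2::real) *\<^sub>R g (2 * r)) has_integral I) {0..t/2}"
proof -
  have "((\<lambda>x. g (2 *\<^sub>R x + 0)) has_integral I /\<^sub>R 2 ^ DIM(real)) (cbox ((0 - 0) /\<^sub>R 2) ((t - 0) /\<^sub>R 2))"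
    using has_integral_affinity'[of g I 0 t 2 0] assms by simp
  then have "((\<lambda>x. g (2 * x)) has_integral I /\<^sub>R 2) {0..t/2}" by simp
  from has_integral_cmul[OF this, of 2] show ?thesis by simp
qed

lemma half2:
  fixes g :: "real \<Rightarrow> 'a::real_normed_vector"
  assumes "(g has_integral I) {0..t}"
  shows "((\<lambda>r. (2::real) *\<^sub>R g (2 * r - 1)) has_integral I) {1/2..(t+1)/2}"
proof -
  have "((\<lambda>x. g (2 *\<^sub>R x + (-1))) has_integral I /\<^sub>R 2 ^ DIM(real)) (cbox ((0 - (-1)) /\<^sub>R 2) ((t - (-1)) /\<^sub>R 2))"
    using has_integral_affinity'[of g I 0 t 2 "-1"] assms by simp
  then have "((\<lambda>x. g (2 * x - 1)) has_integral I /\<^sub>R 2) {1/2..(t+1)/2}" by (simp add: add.commute)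
  from has_integral_cmul[OF this, of 2] show ?thesis by simp
qed

lemma J_int1:
  fixes gA gB :: "real \<Rightarrow> 'a::banach"
  assumes "(gA has_integral I) {0..t}" "0 \<le> t" "t \<le> 1"
  shows "(J gA gB has_integral I) {0..t/2}"
proof -
  have h: "((\<lambda>r. (2::real) *\<^sub>R gA (2 * r)) has_integral I) {0..t/2}" by (rule half1[OF assms(1)])
  show ?thesis
    by (rule has_integral_spike_finite[where S="{}", OF _ _ h]) (use assms in \<open>auto simp: J_def\<close>)
qed

lemma J_int2:
  fixes gA gB :: "real \<Rightarrow> 'a::banach"
  assumes "(gA has_integral I1) {0..1}" "(gB has_integral I2) {0..t}" "0 \<le> t" "t \<le> 1"
  shows "(J gA gB has_integral (I1 + I2)) {0..(t+1)/2}"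
proof -
  have a: "(J gA gB has_integral I1) {0..1/2}" using J_int1[OF assms(1)] by simp
  have h: "((\<lambda>r. (2::real) *\<^sub>R gB (2 * r - 1)) has_integral I2) {1/2..(t+1)/2}" by (rule half2[OF assms(2)])
  have b: "(J gA gB has_integral I2) {1/2..(t+1)/2}"
    by (rule has_integral_spike_finite[where S="{1/2}", OF _ _ h]) (auto simp: J_def)
  show ?thesis by (rule has_integral_combine[OF _ _ a b]) (use assms in auto)
qed

lemma J_norm: "norm (J gA gB s) = J (\<lambda>r. norm (gA r)) (\<lambda>r. norm (gB r)) s"
  by (simp add: J_def)

lemma J_abs_int:
  fixes gA gB :: "real \<Rightarrow> real"
  assumes "gA absolutely_integrable_on {0..1}" "gB absolutely_integrable_on {0..1}"
  shows "J gA gB absolutely_integrable_on {0..1}"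
proof -
  have i1: "(gA has_integral integral {0..1} gA) {0..1}" "(gB has_integral integral {0..1} gB) {0..1}"
    using assms by (auto simp: absolutely_integrable_on_def)
  have i2: "((\<lambda>r. norm (gA r)) has_integral integral {0..1} (\<lambda>r. norm (gA r))) {0..1}"
           "((\<lambda>r. norm (gB r)) has_integral integral {0..1} (\<lambda>r. norm (gB r))) {0..1}"
    using assms by (auto simp: absolutely_integrable_on_def)
  have "J gA gB integrable_on {0..1}" using J_int2[OF i1] by auto
  moreover have "(\<lambda>s. norm (J gA gB s)) integrable_on {0..1}"
    unfolding J_norm using J_int2[OF i2] by auto
  ultimately show ?thesis by (simp add: absolutely_integrable_on_def)
qed

definition reach :: "real \<Rightarrow> real \<times> real \<times> real \<Rightarrow> real \<times> real \<times> real \<Rightarrow> real \<Rightarrow> bool" where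
  "reach m p q l \<longleftrightarrow> (\<exists>\<gamma> a b. horizontal m \<gamma> a b \<and> \<gamma> 0 = p \<and> \<gamma> 1 = q \<and> hlength a b \<le> l)"

lemma hfield_scale: "hfield m (c * a) (c * b) p = c *\<^sub>R hfield m a b p"
  by (cases p) (simp add: hfield_def algebra_simps)


lemma pair_abs_int:
  fixes a b :: "real \<Rightarrow> real"
  assumes "a absolutely_integrable_on S" "b absolutely_integrable_on S"
  shows "(\<lambda>r. (a r, b r)) absolutely_integrable_on S"
proof (rule absolutely_integrable_integrable_bound[where g="\<lambda>r. \<bar>a r\<bar> + \<bar>b r\<bar>"])
  show "norm (a r, b r) \<le> \<bar>a r\<bar> + \<bar>b r\<bar>" for r
    using norm_Pair_le[of "a r" "b r"] by simp
  have "a integrable_on S" "b integrable_on S" using assms by (auto simp: absolutely_integrable_on_def)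
  then show "(\<lambda>r. (a r, b r)) integrable_on S"
    using has_integral_Pair by (metis has_integral_integrable_integral)
  have "(\<lambda>r. norm (a r)) integrable_on S" "(\<lambda>r. norm (b r)) integrable_on S"
    using assms by (auto simp: absolutely_integrable_on_def)
  then show "(\<lambda>r. \<bar>a r\<bar> + \<bar>b r\<bar>) integrable_on S" by (auto intro: integrable_add)
qed

lemma norm_int:
  fixes a b :: "real \<Rightarrow> real"
  assumes "a absolutely_integrable_on S" "b absolutely_integrable_on S"
  shows "(\<lambda>r. sqrt ((a r)\<^sup>2 + (b r)\<^sup>2)) integrable_on S"
proof -
  have "(\<lambda>r. norm (a r, b r)) integrable_on S"
    using pair_abs_int[OF assms] by (auto simp: absolutely_integrable_on_def)
  then show ?thesis by (simp add: norm_Pair)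
qed

lemma reach_trans:
  assumes "reach m p q l1" "reach m q r l2"
  shows "reach m p r (l1 + l2)"
proof -
  obtain \<gamma>1 a1 b1 where h1: "horizontal m \<gamma>1 a1 b1" "\<gamma>1 0 = p" "\<gamma>1 1 = q" "hlength a1 b1 \<le> l1"
    using assms(1) by (auto simp: reach_def)
  obtain \<gamma>2 a2 b2 where h2: "horizontal m \<gamma>2 a2 b2" "\<gamma>2 0 = q" "\<gamma>2 1 = r" "hlength a2 b2 \<le> l2"
    using assms(2) by (auto simp: reach_def)
  have H1: "((\<lambda>r. hfield m (a1 r) (b1 r) (\<gamma>1 r)) has_integral \<gamma>1 s - \<gamma>1 0) {0..s}"
    if "s \<in> {0..1}" for s using h1(1) that unfolding horizontal_def by blast
  have H2: "((\<lambda>r. hfield m (a2 r) (b2 r) (\<gamma>2 r)) has_integral \<gamma>2 s - \<gamma>2 0) {0..s}"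
    if "s \<in> {0..1}" for s using h2(1) that unfolding horizontal_def by blast
  have A1: "a1 absolutely_integrable_on {0..1}" "b1 absolutely_integrable_on {0..1}"
    using h1(1) unfolding horizontal_def by blast+
  have A2: "a2 absolutely_integrable_on {0..1}" "b2 absolutely_integrable_on {0..1}"
    using h2(1) unfolding horizontal_def by blast+
  define \<gamma> where "\<gamma> s = (if s \<le> 1/2 then \<gamma>1 (2 * s) else \<gamma>2 (2 * s - 1))" for s
  define a where "a = J a1 a2"
  define b where "b = J b1 b2"
  have hf: "hfield m (a s) (b s) (\<gamma> s) =
    J (\<lambda>r. hfield m (a1 r) (b1 r) (\<gamma>1 r)) (\<lambda>r. hfield m (a2 r) (b2 r) (\<gamma>2 r)) s" for s
  proof (cases "s \<le> 1/2")
    case True then show ?thesis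
      by (simp only: a_def b_def J_def \<gamma>_def if_P real_scaleR_def hfield_scale)
  next
    case False then show ?thesis
      by (simp only: a_def b_def J_def \<gamma>_def if_not_P real_scaleR_def hfield_scale not_False_eq_True)
  qed
  have hor: "horizontal m \<gamma> a b"
    unfolding horizontal_def
  proof (intro conjI ballI)
    show "a absolutely_integrable_on {0..1}" "b absolutely_integrable_on {0..1}"
      unfolding a_def b_def using A1 A2 by (blast intro: J_abs_int)+
    fix s :: real assume s: "s \<in> {0..1}"
    show "((\<lambda>r. hfield m (a r) (b r) (\<gamma> r)) has_integral \<gamma> s - \<gamma> 0) {0..s}"
      unfolding hf
    proof (cases "s \<le> 1/2")
      case True
      have "((\<lambda>r. hfield m (a1 r) (b1 r) (\<gamma>1 r)) has_integral \<gamma>1 (2 * s) - \<gamma>1 0) {0..2 * s}"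
        using s True by (intro H1) auto
      from J_int1[OF this, where gB="\<lambda>r. hfield m (a2 r) (b2 r) (\<gamma>2 r)"] s True
      have "(J (\<lambda>r. hfield m (a1 r) (b1 r) (\<gamma>1 r)) (\<lambda>r. hfield m (a2 r) (b2 r) (\<gamma>2 r)) has_integral \<gamma>1 (2 * s) - \<gamma>1 0) {0..2 * s / 2}"
        by simp
      moreover have "\<gamma> s = \<gamma>1 (2 * s)" "\<gamma> 0 = \<gamma>1 0" "2 * s / 2 = s" using True by (simp_all add: \<gamma>_def)
      ultimately show "(J (\<lambda>r. hfield m (a1 r) (b1 r) (\<gamma>1 r)) (\<lambda>r. hfield m (a2 r) (b2 r) (\<gamma>2 r)) has_integral \<gamma> s - \<gamma> 0) {0..s}"
        by simp
    next
      case False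
      have i1: "((\<lambda>r. hfield m (a1 r) (b1 r) (\<gamma>1 r)) has_integral \<gamma>1 1 - \<gamma>1 0) {0..1}"
        by (intro H1) auto
      have i2: "((\<lambda>r. hfield m (a2 r) (b2 r) (\<gamma>2 r)) has_integral \<gamma>2 (2 * s - 1) - \<gamma>2 0) {0..2 * s - 1}"
        using s False by (intro H2) auto
      from J_int2[OF i1 i2] s False
      have "(J (\<lambda>r. hfield m (a1 r) (b1 r) (\<gamma>1 r)) (\<lambda>r. hfield m (a2 r) (b2 r) (\<gamma>2 r)) has_integral (\<gamma>1 1 - \<gamma>1 0) + (\<gamma>2 (2 * s - 1) - \<gamma>2 0)) {0..(2 * s - 1 + 1) / 2}"
        by simp
      moreover have "\<gamma> s = \<gamma>2 (2 * s - 1)" "\<gamma> 0 = \<gamma>1 0" "(2 * s - 1 + 1) / 2 = s"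
        "(\<gamma>1 1 - \<gamma>1 0) + (\<gamma>2 (2 * s - 1) - \<gamma>2 0) = \<gamma>2 (2 * s - 1) - \<gamma>1 0"
        using False h1(3) h2(2) by (simp_all add: \<gamma>_def)
      ultimately show "(J (\<lambda>r. hfield m (a1 r) (b1 r) (\<gamma>1 r)) (\<lambda>r. hfield m (a2 r) (b2 r) (\<gamma>2 r)) has_integral \<gamma> s - \<gamma> 0) {0..s}"
        by simp
    qed
  qed
  have n: "sqrt ((a s)\<^sup>2 + (b s)\<^sup>2) = J (\<lambda>r. sqrt ((a1 r)\<^sup>2 + (b1 r)\<^sup>2)) (\<lambda>r. sqrt ((a2 r)\<^sup>2 + (b2 r)\<^sup>2)) s" for s
  proof -
    have "sqrt ((2 * x)\<^sup>2 + (2 * y)\<^sup>2) = 2 * sqrt (x\<^sup>2 + y\<^sup>2)" for x y :: real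
    proof -
      have "(2 * x)\<^sup>2 + (2 * y)\<^sup>2 = 2\<^sup>2 * (x\<^sup>2 + y\<^sup>2)" by (simp add: algebra_simps)
      then have "sqrt ((2 * x)\<^sup>2 + (2 * y)\<^sup>2) = sqrt (2\<^sup>2) * sqrt (x\<^sup>2 + y\<^sup>2)"
        by (simp only: real_sqrt_mult)
      then show ?thesis by simp
    qed
    then have e: "sqrt (((2::real) *\<^sub>R x)\<^sup>2 + ((2::real) *\<^sub>R y)\<^sup>2) = (2::real) *\<^sub>R sqrt (x\<^sup>2 + y\<^sup>2)" for x y :: real
      by simp
    show ?thesis
    proof (cases "s \<le> 1/2")
      case True then show ?thesis by (simp only: a_def b_def J_def if_P e)
    next
      case False then show ?thesis by (simp only: a_def b_def J_def if_not_P e not_False_eq_True)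
    qed

  qed
  have ni: "((\<lambda>r. sqrt ((a1 r)\<^sup>2 + (b1 r)\<^sup>2)) has_integral hlength a1 b1) {0..1}"
           "((\<lambda>r. sqrt ((a2 r)\<^sup>2 + (b2 r)\<^sup>2)) has_integral hlength a2 b2) {0..1}"
    using norm_int[OF A1] norm_int[OF A2] by (auto simp: hlength_def)
  have "hlength a b = hlength a1 b1 + hlength a2 b2"
    unfolding hlength_def n using J_int2[OF ni] by (simp add: hlength_def integral_unique)
  moreover have "\<gamma> 0 = p" "\<gamma> 1 = r" using h1 h2 by (simp_all add: \<gamma>_def)
  ultimately show ?thesis unfolding reach_def using hor h1(4) h2(4)
    by (intro exI[of _ \<gamma>] exI[of _ a] exI[of _ b]) auto
qed


lemma lift_reach:
  fixes P P' :: "real \<Rightarrow> real \<times> real"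
  assumes der: "\<And>s. (P has_vector_derivative P' s) (at s)" and cont: "continuous_on {0..1} P'"
    and m: "m > 0"
  shows "reach m (fst (P 0), snd (P 0), tz) (fst (P 1), snd (P 1), tz + integral {0..1} (liftF m P P'))
           (integral {0..1} (\<lambda>r. norm (P' r)))"
  unfolding reach_def
  by (rule exI, rule exI, rule exI, rule conjI[OF lift(1)[OF der cont m]]) (simp add: lift(2)[OF der cont m])

definition rot :: "real \<Rightarrow> real \<times> real \<Rightarrow> real \<times> real" where
  "rot th w = (cos th * fst w - sin th * snd w, sin th * fst w + cos th * snd w)"

lemma norm_rot: "norm (rot th w) = norm w"
proof -
  have "(cos th * fst w - sin th * snd w)\<^sup>2 + (sin th * fst w + cos th * snd w)\<^sup>2
        = ((sin th)\<^sup>2 + (cos th)\<^sup>2) * ((fst w)\<^sup>2 + (snd w)\<^sup>2)"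
    by algebra
  also have "\<dots> = (fst w)\<^sup>2 + (snd w)\<^sup>2" by simp
  finally have e: "(cos th * fst w - sin th * snd w)\<^sup>2 + (sin th * fst w + cos th * snd w)\<^sup>2 = (fst w)\<^sup>2 + (snd w)\<^sup>2" .
  show ?thesis unfolding rot_def norm_prod_def using e by simp
qed

lemma seg_general:
  fixes w w' :: "real \<times> real"
  assumes m: "m > 0"
  shows "reach m (fst w, snd w, t) (fst w', snd w', t + integral {0..1} (liftF m (\<lambda>s. w + s *\<^sub>R (w' - w)) (\<lambda>s. w' - w))) (norm (w' - w))"
proof -
  have d: "((\<lambda>s. w + s *\<^sub>R (w' - w)) has_vector_derivative (w' - w)) (at s)" for s
    by (auto intro!: derivative_eq_intros)
  have c: "continuous_on {0..1} (\<lambda>s::real. w' - w)" by simp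
  show ?thesis using lift_reach[where P="\<lambda>s. w + s *\<^sub>R (w' - w)" and P'="\<lambda>s. w' - w" and tz=t, OF d c m] by simp
qed

lemma liftF_seg: "liftF m (\<lambda>s. w + s *\<^sub>R (w' - w)) (\<lambda>s. w' - w)
   = (\<lambda>r. - (norm (w + r *\<^sub>R (w' - w)) powr (2*m) * omega w w'))"
  by (rule ext) (simp add: liftF_def omega_def algebra_simps)

lemma seg0:
  assumes m: "m > 0" and "omega w w' = 0"
  shows "reach m (fst w, snd w, t) (fst w', snd w', t) (norm (w' - w))"
  using seg_general[OF m, of w t w'] assms(2) by (simp add: liftF_seg)

lemma arc:
  assumes m: "m > 0"
  shows "reach m (fst w, snd w, t) (fst (rot th w), snd (rot th w), t - th * norm w powr (2*m+2)) (\<bar>th\<bar> * norm w)"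
proof -
  define P where "P s = rot (th * s) w" for s
  define P' where "P' s = th *\<^sub>R (- snd (P s), fst (P s))" for s
  have der: "(P has_vector_derivative P' s) (at s)" for s
  proof -
    have d1: "((\<lambda>x. cos (th * x) * fst w - sin (th * x) * snd w) has_vector_derivative
       (- th * (sin (th * s) * fst w + cos (th * s) * snd w))) (at s)"
      unfolding has_real_derivative_iff_has_vector_derivative[symmetric]
      by (auto intro!: derivative_eq_intros simp: algebra_simps)
    have d2: "((\<lambda>x. sin (th * x) * fst w + cos (th * x) * snd w) has_vector_derivative
       (th * (cos (th * s) * fst w - sin (th * s) * snd w))) (at s)"
      unfolding has_real_derivative_iff_has_vector_derivative[symmetric]
      by (auto intro!: derivative_eq_intros simp: algebra_simps)
    have "P' s = (- th * (sin (th * s) * fst w + cos (th * s) * snd w), th * (cos (th * s) * fst w - sin (th * s) * snd w))"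
      by (simp add: P'_def P_def rot_def algebra_simps)
    then show ?thesis unfolding P_def rot_def using has_vector_derivative_Pair[OF d1 d2] by simp
  qed
  have cont: "continuous_on {0..1} P'"
    unfolding P'_def P_def rot_def by (intro continuous_intros)
  have nP: "norm (P s) = norm w" for s by (simp add: P_def norm_rot)
  have sq: "(fst (P s))\<^sup>2 + (snd (P s))\<^sup>2 = (norm w)\<^sup>2" for s
    using nP[of s] by (simp add: norm_Pair norm_prod_def)
  have lf: "liftF m P P' s = - th * norm w powr (2*m+2)" for s
  proof -
    have "liftF m P P' s = norm w powr (2*m) * (- th * ((fst (P s))\<^sup>2 + (snd (P s))\<^sup>2))"
      unfolding liftF_def nP by (simp add: P'_def algebra_simps power2_eq_square)
    also have "\<dots> = - th * (norm w powr (2*m) * norm w powr 2)"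
      unfolding sq by simp
    also have "\<dots> = - th * norm w powr (2*m+2)" by (simp add: powr_add)
    finally show ?thesis .
  qed
  have nP': "norm (P' s) = \<bar>th\<bar> * norm w" for s
  proof -
    have "norm (P' s) = \<bar>th\<bar> * norm (- snd (P s), fst (P s))" unfolding P'_def norm_scaleR by simp
    also have "norm (- snd (P s), fst (P s)) = norm (P s)"
      by (simp add: norm_Pair norm_prod_def add.commute)
    finally show ?thesis using nP by simp
  qed
  have "reach m (fst (P 0), snd (P 0), t) (fst (P 1), snd (P 1), t + integral {0..1} (liftF m P P'))
           (integral {0..1} (\<lambda>r. norm (P' r)))"
    by (rule lift_reach[OF der cont m])
  moreover have "liftF m P P' = (\<lambda>s. - th * norm w powr (2*m+2))" by (rule ext) (rule lf)
  ultimately show ?thesis by (simp add: nP' P_def rot_def)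
qed


lemma reach_refl: "reach m p p 0"
proof -
  have "horizontal m (\<lambda>s. p) (\<lambda>s. 0) (\<lambda>s. 0)"
  proof -
    have z: "(\<lambda>r::real. (0::real, 0::real, 0::real)) = (\<lambda>r. 0)" by (simp add: zero_prod_def)
    show ?thesis unfolding horizontal_def
      by (cases p) (auto simp: hfield_def z)
  qed
  moreover have "hlength (\<lambda>s. 0) (\<lambda>s. 0) = 0" by (simp add: hlength_def)
  ultimately show ?thesis unfolding reach_def by fastforce
qed

lemma reach_mono: "reach m p q l \<Longrightarrow> l \<le> l' \<Longrightarrow> reach m p q l'"
  unfolding reach_def by force

lemma rot_scale: "rot a (c *\<^sub>R v) = c *\<^sub>R rot a v"
  by (simp add: rot_def algebra_simps)

lemma rot_inv: "rot (- a) (rot a v) = v"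
proof -
  have "(cos a * (cos a * fst v - sin a * snd v) + sin a * (sin a * fst v + cos a * snd v)) = ((sin a)\<^sup>2 + (cos a)\<^sup>2) * fst v"
    "(- (sin a * (cos a * fst v - sin a * snd v)) + cos a * (sin a * fst v + cos a * snd v)) = ((sin a)\<^sup>2 + (cos a)\<^sup>2) * snd v"
    by algebra+
  then show ?thesis by (simp add: rot_def prod_eq_iff)
qed

lemma omega_scale: "omega (c *\<^sub>R v) v = 0" "omega v (c *\<^sub>R v) = 0"
  by (simp_all add: omega_def)

lemma loop2:
  fixes w :: "real \<times> real"
  assumes m: "m \<ge> 1" and N: "norm w > 0" and U: "U > 0" "U < 2 * pi * norm w powr (2*m+2)"
    and sg: "\<bar>\<sigma>\<bar> = 1"
  shows "reach m (fst w, snd w, t) (fst w, snd w, t - \<sigma> * U) (7 * sqrt U / norm w powr m)"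
proof -
  define N where "N = norm w"
  define n where "n = 2*m+2"
  define lam where "lam = sqrt U / N powr (m+1)"
  define th where "th = lam\<^sup>2 / ((1+lam) powr n - 1)"
  have m0: "m > 0" using m by simp
  have Np: "N > 0" using N by (simp add: N_def)
  have lp: "lam > 0" using U Np by (simp add: lam_def)
  have l2: "lam\<^sup>2 * N powr n = U"
  proof -
    have "(N powr (m+1))\<^sup>2 = N powr n" by (simp add: n_def power2_eq_square flip: powr_add)
    then show ?thesis using U Np by (simp add: lam_def power_divide)
  qed
  have l3: "lam < 3"
  proof -
    have "lam\<^sup>2 * N powr n < 2 * pi * N powr n" using l2 U by (simp add: N_def n_def)
    then have "lam\<^sup>2 < 2 * pi" using Np by simp
    also have "2 * pi < 3\<^sup>2" using pi_less_4 by simp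
    finally have "lam\<^sup>2 < 3\<^sup>2" .
    then show ?thesis by (rule power_less_imp_less_base) simp
  qed
  have bern: "(1+lam) powr n \<ge> 1 + lam"
  proof -
    have "(1+lam) powr 1 \<le> (1+lam) powr n" using lp m by (intro powr_mono) (auto simp: n_def)
    then show ?thesis using lp by simp
  qed
  have dpos: "(1+lam) powr n - 1 > 0" using bern lp by simp
  have thp: "th > 0" using lp dpos by (simp add: th_def)
  have thl: "th \<le> lam"
  proof -
    have "lam\<^sup>2 \<le> lam * ((1+lam) powr n - 1)" using bern lp by (simp add: power2_eq_square)
    then show ?thesis using dpos by (simp add: th_def divide_le_eq mult.commute)
  qed
  have key: "th * ((1+lam) powr n - 1) * N powr n = U"
    using dpos l2 by (simp add: th_def)
  define w1 where "w1 = (1+lam) *\<^sub>R w"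
  define w2 where "w2 = rot (\<sigma>*th) w1"
  define w3 where "w3 = rot (\<sigma>*th) w"
  have nw1: "norm w1 = (1+lam) * N" using lp by (simp add: w1_def N_def)
  have w2e: "w2 = (1+lam) *\<^sub>R w3" by (simp add: w2_def w3_def w1_def rot_scale)
  have nw3: "norm w3 = N" by (simp add: w3_def norm_rot N_def)
  have s1: "reach m (fst w, snd w, t) (fst w1, snd w1, t) (lam * N)"
  proof -
    have "reach m (fst w, snd w, t) (fst w1, snd w1, t) (norm (w1 - w))"
      by (rule seg0[OF m0]) (simp add: w1_def omega_scale)
    moreover have "norm (w1 - w) = lam * N" using lp by (simp add: w1_def N_def algebra_simps)
    ultimately show ?thesis by simp
  qed
  define t1 where "t1 = t - \<sigma> * th * ((1+lam) * N) powr n"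
  have s2: "reach m (fst w1, snd w1, t) (fst w2, snd w2, t1) (th * ((1+lam) * N))"
    using arc[OF m0, of w1 t "\<sigma>*th"] sg thp nw1
    by (simp add: w2_def t1_def n_def abs_mult)
  have s3: "reach m (fst w2, snd w2, t1) (fst w3, snd w3, t1) (lam * N)"
  proof -
    have "reach m (fst w2, snd w2, t1) (fst w3, snd w3, t1) (norm (w3 - w2))"
      by (rule seg0[OF m0]) (simp add: w2e omega_scale)
    moreover have "norm (w3 - w2) = lam * N" using lp nw3
      by (simp add: w2e algebra_simps)
    ultimately show ?thesis by simp
  qed
  define t2 where "t2 = t1 + \<sigma> * th * N powr n"
  have s4: "reach m (fst w3, snd w3, t1) (fst w, snd w, t2) (th * N)"
  proof -
    have r: "rot (- (\<sigma> * th)) w3 = w" unfolding w3_def by (rule rot_inv)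
    show ?thesis using arc[OF m0, of w3 t1 "-\<sigma>*th"] sg thp nw3
      by (simp add: r t2_def n_def abs_mult)
  qed
  have tt: "t2 = t - \<sigma> * U"
  proof -
    have "((1+lam) * N) powr n = (1+lam) powr n * N powr n" using lp Np by (simp add: powr_mult)
    then have "t2 = t - \<sigma> * (th * ((1+lam) powr n - 1) * N powr n)"
      by (simp add: t2_def t1_def algebra_simps)
    then show ?thesis using key by simp
  qed
  have "reach m (fst w, snd w, t) (fst w, snd w, t2) (lam * N + th * ((1+lam) * N) + lam * N + th * N)"
    using reach_trans[OF reach_trans[OF reach_trans[OF s1 s2] s3] s4] .
  moreover have "lam * N + th * ((1+lam) * N) + lam * N + th * N \<le> 7 * sqrt U / norm w powr m"
  proof -
    have "th * ((1+lam) * N) \<le> lam * (4 * N)" using thl thp lp l3 Np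
      by (intro mult_mono) auto
    moreover have "th * N \<le> lam * N" using thl Np by simp
    moreover have "lam * N = sqrt U / N powr m"
    proof -
      have "N powr (m+1) = N powr m * N" using Np by (simp add: powr_add)
      then show ?thesis using Np by (simp add: lam_def)
    qed
    ultimately show ?thesis by (simp add: N_def)
  qed
  ultimately show ?thesis using tt reach_mono by blast
qed


lemma loop1:
  fixes w :: "real \<times> real"
  assumes m: "m \<ge> 1" and U: "U > 0" "2 * pi * norm w powr (2*m+2) \<le> U"
    and sg: "\<bar>\<sigma>\<bar> = 1"
  shows "reach m (fst w, snd w, t) (fst w, snd w, t - \<sigma> * U) (12 * U powr (1/(2*m+2)))"
proof -
  define N where "N = norm w"
  define n where "n = 2*m+2"
  define R where "R = (U / (2*pi)) powr (1/n)"
  define e where "e = (if w = 0 then (1::real, 0::real) else (1/N) *\<^sub>R w)"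
  define W where "W = R *\<^sub>R e"
  have m0: "m > 0" using m by simp
  have np: "n > 0" using m by (simp add: n_def)
  have Rp: "R > 0" using U by (simp add: R_def)
  have Rn: "R powr n = U / (2*pi)" using np U by (simp add: R_def powr_powr)
  have ne: "norm e = 1" by (simp add: e_def N_def)
  have nW: "norm W = R" using Rp ne by (simp add: W_def)
  have RN: "N \<le> R"
  proof -
    have "N powr n \<le> U / (2*pi)" using U by (simp add: N_def n_def field_simps)
    then have "(N powr n) powr (1/n) \<le> (U / (2*pi)) powr (1/n)"
      by (intro powr_mono2) (use np in auto)
    then show ?thesis using np by (simp add: powr_powr R_def N_def)
  qed
  have om: "omega w W = 0" "omega W w = 0"
  proof -
    have "omega w W = 0 \<and> omega W w = 0"
    proof (cases "w = 0")
      case True then show ?thesis by (simp add: omega_def)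
    next
      case False
      then have "W = (R/N) *\<^sub>R w" by (simp add: W_def e_def)
      then show ?thesis by (simp add: omega_scale)
    qed
    then show "omega w W = 0" "omega W w = 0" by auto
  qed
  have dist1: "norm (W - w) \<le> 2 * R" "norm (w - W) \<le> 2 * R"
    using norm_triangle_ineq4[of W w] norm_triangle_ineq4[of w W] nW RN by (auto simp: N_def)
  have s1: "reach m (fst w, snd w, t) (fst W, snd W, t) (2 * R)"
    using reach_mono[OF seg0[OF m0 om(1)] dist1(1)] .
  have rW: "rot (\<sigma> * (2*pi)) W = W"
  proof -
    have "\<sigma> = 1 \<or> \<sigma> = -1" using sg by auto
    then have "cos (\<sigma> * (2*pi)) = 1" "sin (\<sigma> * (2*pi)) = 0" by auto
    then show ?thesis by (simp add: rot_def)
  qed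
  have s2: "reach m (fst W, snd W, t) (fst W, snd W, t - \<sigma> * U) (2 * pi * R)"
  proof -
    have e: "t - \<sigma> * (2*pi) * norm W powr (2*m+2) = t - \<sigma> * U" using Rn nW by (simp add: n_def)
    have l: "\<bar>\<sigma> * (2*pi)\<bar> * norm W = 2 * pi * R" using sg nW by (simp add: abs_mult)
    show ?thesis using arc[OF m0, of W t "\<sigma> * (2*pi)"] unfolding e l rW .
  qed
  have s3: "reach m (fst W, snd W, t - \<sigma> * U) (fst w, snd w, t - \<sigma> * U) (2 * R)"
    using reach_mono[OF seg0[OF m0 om(2)] dist1(2)] .
  have "reach m (fst w, snd w, t) (fst w, snd w, t - \<sigma> * U) (2 * R + 2 * pi * R + 2 * R)"
    using reach_trans[OF reach_trans[OF s1 s2] s3] .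
  moreover have "2 * R + 2 * pi * R + 2 * R \<le> 12 * U powr (1/(2*m+2))"
  proof -
    have "R \<le> U powr (1/n)" unfolding R_def using U np pi_gt3
      by (intro powr_mono2) (auto simp: field_simps)
    moreover have "2 * pi * R \<le> 8 * R" using pi_less_4 Rp by simp
    ultimately show ?thesis unfolding n_def by linarith
  qed
  ultimately show ?thesis by (rule reach_mono)
qed

lemma loop:
  fixes w :: "real \<times> real"
  assumes m: "m \<ge> 1"
  shows "\<exists>l. reach m (fst w, snd w, t) (fst w, snd w, t + u) l \<and> l \<le> 60 * \<bar>u\<bar> powr (1/(2*m+2))
            \<and> (norm w > 0 \<longrightarrow> l \<le> 60 * sqrt \<bar>u\<bar> / norm w powr m)"
proof (cases "u = 0")
  case True
  then show ?thesis using reach_refl[of m "(fst w, snd w, t)"] by (intro exI[of _ 0]) auto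
next
  case False
  define U where "U = \<bar>u\<bar>"
  define \<sigma> where "\<sigma> = (if u \<ge> 0 then -1 else 1::real)"
  define N where "N = norm w"
  define n where "n = 2*m+2"
  have Up: "U > 0" using False by (simp add: U_def)
  have sg: "\<bar>\<sigma>\<bar> = 1" by (simp add: \<sigma>_def)
  have tu: "t - \<sigma> * U = t + u" by (simp add: \<sigma>_def U_def)
  have np: "n > 0" using m by (simp add: n_def)
  have e1: "U powr (1/n) * U powr (m/n) = sqrt U"
  proof -
    have h: "1/n + m/n = 1/2" using np by (simp add: n_def field_simps)
    have "U powr (1/n) * U powr (m/n) = U powr (1/n + m/n)" by (simp add: powr_add)
    also have "\<dots> = U powr (1/2)" unfolding h ..
    also have "\<dots> = sqrt U" using Up by (simp add: powr_half_sqrt)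
    finally show ?thesis .
  qed
  show ?thesis
  proof (cases "2 * pi * N powr n \<le> U")
    case True
    have r: "reach m (fst w, snd w, t) (fst w, snd w, t + u) (12 * U powr (1/(2*m+2)))"
      using loop1[OF m Up _ sg, of w t] True tu by (simp add: N_def n_def)
    show ?thesis
    proof (intro exI conjI impI)
      show "reach m (fst w, snd w, t) (fst w, snd w, t + u) (12 * U powr (1/(2*m+2)))" by (rule r)
      show "12 * U powr (1/(2*m+2)) \<le> 60 * \<bar>u\<bar> powr (1/(2*m+2))" by (simp add: U_def)
      assume Np: "norm w > 0"
      have "N powr n \<le> U" using True pi_gt3 Np
      proof -
        have "1 * N powr n \<le> (2*pi) * N powr n" by (rule mult_right_mono) (use pi_gt3 in auto)
        then show ?thesis using True by linarith
      qed
      then have "(N powr n) powr (m/n) \<le> U powr (m/n)" by (intro powr_mono2) (use np m in auto)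
      then have Nm: "N powr m \<le> U powr (m/n)" using np by (simp add: powr_powr)
      have "U powr (1/n) * N powr m \<le> sqrt U"
        using mult_left_mono[OF Nm, of "U powr (1/n)"] e1 by simp
      then have "U powr (1/n) \<le> sqrt U / N powr m" using Np by (simp add: N_def field_simps)
      moreover have "60 * sqrt \<bar>u\<bar> / norm w powr m = 60 * (sqrt U / N powr m)" by (simp add: U_def N_def)
      moreover have "0 \<le> U powr (1/n)" by simp
      ultimately have "12 * U powr (1/n) \<le> 60 * sqrt \<bar>u\<bar> / norm w powr m" by linarith
      then show "12 * U powr (1/(2*m+2)) \<le> 60 * sqrt \<bar>u\<bar> / norm w powr m"
        by (simp add: n_def)
    qed
  next
    case False
    then have Np: "N > 0" using Up by (auto simp: N_def n_def)
    have r: "reach m (fst w, snd w, t) (fst w, snd w, t + u) (7 * sqrt U / N powr m)"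
      using loop2[OF m _ Up _ sg, of w t] False tu Np by (simp add: N_def n_def)
    show ?thesis
    proof (intro exI conjI impI)
      show "reach m (fst w, snd w, t) (fst w, snd w, t + u) (7 * sqrt U / N powr m)" by (rule r)
      show "7 * sqrt U / N powr m \<le> 60 * sqrt \<bar>u\<bar> / norm w powr m"
        using Np by (simp add: U_def N_def divide_right_mono)
      have "U powr (m/n) \<le> (2 * pi * N powr n) powr (m/n)"
        using False Up by (intro powr_mono2) (use np m in auto)
      also have "\<dots> = (2*pi) powr (m/n) * N powr m" using np Np by (simp add: powr_mult powr_powr)
      also have "(2*pi) powr (m/n) \<le> (2*pi) powr 1"
        using pi_gt3 np m by (intro powr_mono) (auto simp: n_def field_simps)
      finally have "U powr (m/n) \<le> 2 * pi * N powr m" using Np by (simp add: mult_right_mono)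
      then have "sqrt U \<le> U powr (1/n) * (2 * pi * N powr m)"
        using e1 by (metis mult_left_mono powr_ge_zero)
      then have "sqrt U / N powr m \<le> 2 * pi * U powr (1/n)" using Np by (simp add: field_simps)
      moreover have "2 * pi * U powr (1/n) \<le> 8 * U powr (1/n)"
        using mult_right_mono[of "2*pi" 8 "U powr (1/n)"] pi_less_4 by simp
      moreover have "7 * sqrt U / N powr m = 7 * (sqrt U / N powr m)" by simp
      moreover have "0 \<le> U powr (1/n)" by simp
      ultimately have "7 * sqrt U / N powr m \<le> 60 * U powr (1/n)" by linarith
      then show "7 * sqrt U / N powr m \<le> 60 * \<bar>u\<bar> powr (1/(2*m+2))"
        by (simp add: U_def n_def)
    qed
  qed
qed


lemma powr_diff_lt:
  fixes x y p M :: real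
  assumes p: "p \<ge> 1" and xy: "0 \<le> x" "x < y" "y \<le> M"
  shows "\<bar>y powr p - x powr p\<bar> \<le> p * M powr (p - 1) * (y - x)"
proof -
  have cont: "continuous_on {x..y} (\<lambda>u. u powr p)"
    using p xy by (intro continuous_on_powr') (auto intro: continuous_intros)
  have dif: "(\<lambda>u. u powr p) differentiable (at z)" if "x < z" "z < y" for z
    using has_real_derivative_powr[of z p] that xy real_differentiable_def by fastforce
  obtain l z where z: "x < z" "z < y" "DERIV (\<lambda>u. u powr p) z :> l" "y powr p - x powr p = (y - x) * l"
    using MVT[OF xy(2) cont dif] by blast
  have "l = p * z powr (p - 1)"
    using DERIV_unique[OF z(3) has_real_derivative_powr[of z p]] z xy by simp
  moreover have "z powr (p - 1) \<le> M powr (p - 1)" using z xy p by (intro powr_mono2) auto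
  moreover have "0 \<le> z powr (p - 1)" by simp
  ultimately have "0 \<le> l" "l \<le> p * M powr (p - 1)" using p by (auto intro: mult_left_mono)
  then show ?thesis using z(4) xy by (simp add: mult_left_mono mult.commute)
qed

lemma powr_diff:
  fixes x y p M :: real
  assumes p: "p \<ge> 1" and "0 \<le> x" "0 \<le> y" "x \<le> M" "y \<le> M"
  shows "\<bar>y powr p - x powr p\<bar> \<le> p * M powr (p - 1) * \<bar>y - x\<bar>"
proof -
  consider "x < y" | "x = y" | "y < x" by linarith
  then show ?thesis
  proof cases
    case 1 then show ?thesis using powr_diff_lt[OF p, of x y M] assms by simp
  next
    case 2 then show ?thesis by simp
  next
    case 3 then show ?thesis using powr_diff_lt[OF p, of y x M] assms by (simp add: abs_minus_commute)
  qed
qed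

lemma cross_le: "\<bar>a * y - b * x\<bar> \<le> norm (a, b) * norm (x, y)"
proof -
  have "(a * y - b * x)\<^sup>2 \<le> (a\<^sup>2 + b\<^sup>2) * (x\<^sup>2 + y\<^sup>2)"
  proof -
    have "(a\<^sup>2 + b\<^sup>2) * (x\<^sup>2 + y\<^sup>2) = (a * y - b * x)\<^sup>2 + (a * x + b * y)\<^sup>2" by algebra
    then show ?thesis by simp
  qed
  then have "sqrt ((a * y - b * x)\<^sup>2) \<le> sqrt ((a\<^sup>2 + b\<^sup>2) * (x\<^sup>2 + y\<^sup>2))" by (rule real_sqrt_le_mono)
  then show ?thesis by (simp add: norm_Pair real_sqrt_mult)
qed


lemma LB:
  fixes m :: real
  assumes m: "m \<ge> 1" and h: "horizontal m \<gamma> a b" and g0: "\<gamma> 0 = (x0, y0, t0)" and g1: "\<gamma> 1 = (xi, eta, tau)"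
  shows "norm ((x0, y0) - (xi, eta)) \<le> hlength a b"
    and "\<bar>tau - t0 + norm (x0, y0) powr (2*m) * omega (x0, y0) (xi, eta)\<bar>
           \<le> (2*m+1) * (norm (x0, y0) + hlength a b) powr (2*m) * (hlength a b)\<^sup>2"
proof -
  define X where "X r = fst (\<gamma> r)" for r
  define Y where "Y r = fst (snd (\<gamma> r))" for r
  define T where "T r = snd (snd (\<gamma> r))" for r
  define F where "F r = norm (X r, Y r) powr (2*m) * (a r * Y r - b r * X r)" for r
  define g where "g r = norm (a r, b r)" for r
  define L where "L = hlength a b"
  have gam: "\<gamma> r = (X r, Y r, T r)" for r by (simp add: X_def Y_def T_def)
  have HS: "((\<lambda>r. (a r, b r, F r)) has_integral (X s - x0, Y s - y0, T s - t0)) {0..s}" if "s \<in> {0..1}" for s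
  proof -
    have "((\<lambda>r. hfield m (a r) (b r) (\<gamma> r)) has_integral \<gamma> s - \<gamma> 0) {0..s}"
      using h that unfolding horizontal_def by blast
    moreover have "(\<lambda>r. hfield m (a r) (b r) (\<gamma> r)) = (\<lambda>r. (a r, b r, F r))"
      by (rule ext) (simp add: gam hfield_simp F_def)
    moreover have "\<gamma> s - \<gamma> 0 = (X s - x0, Y s - y0, T s - t0)" by (subst gam[of s], subst g0, simp)
    ultimately show ?thesis by simp
  qed
  have IA: "(a has_integral X s - x0) {0..s}" if "s \<in> {0..1}" for s
    using has_integral_fst[OF HS[OF that]] by simp
  have IB: "(b has_integral Y s - y0) {0..s}" if "s \<in> {0..1}" for s
    using has_integral_fst[OF has_integral_snd[OF HS[OF that]]] by simp
  have IF: "(F has_integral T 1 - t0) {0..1}"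
    using has_integral_snd[OF has_integral_snd[OF HS[of 1]]] by simp
  have X1: "X 1 = xi" "Y 1 = eta" "T 1 = tau" "X 0 = x0" "Y 0 = y0" by (simp_all add: X_def Y_def T_def g1 g0)
  have ab: "a absolutely_integrable_on {0..1}" "b absolutely_integrable_on {0..1}"
    using h unfolding horizontal_def by blast+
  have gi: "g integrable_on {0..1}"
    using pair_abs_int[OF ab] unfolding g_def absolutely_integrable_on_def by blast
  have "g = (\<lambda>s. sqrt ((a s)\<^sup>2 + (b s)\<^sup>2))" by (rule ext) (simp add: g_def norm_Pair)
  then have gL: "integral {0..1} g = L" by (simp add: L_def hlength_def)
  have g0': "0 \<le> g r" for r by (simp add: g_def)
  have W: "norm (X s - x0, Y s - y0) \<le> L" if s: "s \<in> {0..1}" for s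
  proof -
    have P: "((\<lambda>r. (a r, b r)) has_integral (X s - x0, Y s - y0)) {0..s}"
      by (rule has_integral_Pair[OF IA[OF s] IB[OF s]])
    have gs: "g integrable_on {0..s}" using s by (intro integrable_subinterval_real[OF gi]) auto
    have "norm (integral {0..s} (\<lambda>r. (a r, b r))) \<le> integral {0..s} g"
      using P gs by (intro integral_norm_bound_integral) (auto simp: g_def)
    also have "\<dots> \<le> integral {0..1} g"
      using gs gi s g0' by (intro integral_subset_le) auto
    finally show ?thesis using P gL by (simp add: integral_unique)
  qed
  show "norm ((x0, y0) - (xi, eta)) \<le> hlength a b"
  proof -
    have "norm ((x0, y0) - (xi, eta)) = norm ((xi, eta) - (x0, y0))" by (rule norm_minus_commute)
    then show ?thesis using W[of 1] X1 by (simp add: L_def)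
  qed
  define N0 where "N0 = norm (x0, y0)"
  define K where "K = (2*m+1) * (N0 + L) powr (2*m) * L"
  define G where "G r = F r - N0 powr (2*m) * (a r * y0 - b r * x0)" for r
  have IG: "(G has_integral (T 1 - t0) - N0 powr (2*m) * ((X 1 - x0) * y0 - (Y 1 - y0) * x0)) {0..1}"
    unfolding G_def
    by (intro has_integral_diff IF has_integral_mult_right has_integral_mult_left IA IB) auto
  have v: "(T 1 - t0) - N0 powr (2*m) * ((X 1 - x0) * y0 - (Y 1 - y0) * x0)
          = tau - t0 + N0 powr (2*m) * omega (x0, y0) (xi, eta)"
    by (simp add: X1 omega_def algebra_simps)
  have Lp: "0 \<le> L" using W[of 0] by (smt (verit) atLeastAtMost_iff norm_ge_zero)
  have pt: "\<bar>G r\<bar> \<le> K * g r" if r: "r \<in> {0..1}" for r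
  proof -
    define Nr where "Nr = norm (X r, Y r)"
    have nW: "norm (X r - x0, Y r - y0) \<le> L" by (rule W[OF r])
    have eqP: "Nr = norm ((x0, y0) + (X r - x0, Y r - y0))" by (simp add: Nr_def)
    have Nr_le: "Nr \<le> N0 + L"
      using norm_triangle_ineq[of "(x0,y0)" "(X r - x0, Y r - y0)"] nW unfolding eqP N0_def by linarith
    have dN: "\<bar>Nr - N0\<bar> \<le> L"
      using norm_triangle_ineq3[of "(X r, Y r)" "(x0, y0)"] nW by (simp add: Nr_def N0_def)
    have Ge: "G r = (Nr powr (2*m) - N0 powr (2*m)) * (a r * Y r - b r * X r)
              + N0 powr (2*m) * (a r * (Y r - y0) - b r * (X r - x0))"
      by (simp add: G_def F_def Nr_def algebra_simps)
    have M0: "0 \<le> N0 + L" using Lp by (simp add: N0_def)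
    have t1a: "\<bar>Nr powr (2*m) - N0 powr (2*m)\<bar> \<le> 2*m * (N0 + L) powr (2*m - 1) * L"
    proof -
      have "\<bar>Nr powr (2*m) - N0 powr (2*m)\<bar> \<le> 2*m * (N0 + L) powr (2*m - 1) * \<bar>Nr - N0\<bar>"
        using m Nr_le Lp by (intro powr_diff) (auto simp: Nr_def N0_def)
      also have "\<dots> \<le> 2*m * (N0 + L) powr (2*m - 1) * L"
        using dN m by (intro mult_left_mono) auto
      finally show ?thesis .
    qed
    have t1b: "\<bar>a r * Y r - b r * X r\<bar> \<le> g r * (N0 + L)"
      using cross_le[of "a r" "Y r" "b r" "X r"] Nr_le g0'[of r]
      by (smt (verit) Nr_def g_def mult_left_mono)
    have t1: "\<bar>(Nr powr (2*m) - N0 powr (2*m)) * (a r * Y r - b r * X r)\<bar> \<le> 2*m * (N0 + L) powr (2*m) * L * g r"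
    proof -
      have "\<bar>(Nr powr (2*m) - N0 powr (2*m)) * (a r * Y r - b r * X r)\<bar>
            \<le> (2*m * (N0 + L) powr (2*m - 1) * L) * (g r * (N0 + L))"
        unfolding abs_mult using t1a t1b Lp m by (intro mult_mono) auto
      also have "\<dots> = 2*m * ((N0 + L) * (N0 + L) powr (2*m - 1)) * L * g r" by (simp add: algebra_simps)
      also have "(N0 + L) * (N0 + L) powr (2*m - 1) = (N0 + L) powr (2*m)"
        using M0 by (simp add: powr_mult_base)
      finally show ?thesis .
    qed
    have t2: "\<bar>N0 powr (2*m) * (a r * (Y r - y0) - b r * (X r - x0))\<bar> \<le> (N0 + L) powr (2*m) * L * g r"
    proof -
      have c: "\<bar>a r * (Y r - y0) - b r * (X r - x0)\<bar> \<le> g r * L"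
        using cross_le[of "a r" "Y r - y0" "b r" "X r - x0"] nW g0'[of r]
        by (smt (verit) g_def mult_left_mono)
      have p: "N0 powr (2*m) \<le> (N0 + L) powr (2*m)"
        using Lp m by (intro powr_mono2) (auto simp: N0_def)
      have "\<bar>N0 powr (2*m) * (a r * (Y r - y0) - b r * (X r - x0))\<bar> \<le> (N0 + L) powr (2*m) * (g r * L)"
        unfolding abs_mult using c p by (intro mult_mono) auto
      then show ?thesis by (simp add: algebra_simps)
    qed
    have "\<bar>G r\<bar> \<le> 2*m * (N0 + L) powr (2*m) * L * g r + (N0 + L) powr (2*m) * L * g r"
      unfolding Ge using t1 t2 abs_triangle_ineq by (smt (verit))
    also have "\<dots> = K * g r" by (simp add: K_def algebra_simps)
    finally show ?thesis .
  qed
  have Kg: "(\<lambda>r. K * g r) integrable_on {0..1}" using integrable_on_cmult_left[OF gi, of K] by simp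
  have "norm (integral {0..1} G) \<le> integral {0..1} (\<lambda>r. K * g r)"
    using IG Kg pt by (intro integral_norm_bound_integral) auto
  also have "\<dots> = K * L" using gL by simp
  finally have "\<bar>tau - t0 + N0 powr (2*m) * omega (x0, y0) (xi, eta)\<bar> \<le> K * L"
    using IG v by (simp add: integral_unique)
  then show "\<bar>tau - t0 + norm (x0, y0) powr (2*m) * omega (x0, y0) (xi, eta)\<bar>
           \<le> (2*m+1) * (norm (x0, y0) + hlength a b) powr (2*m) * (hlength a b)\<^sup>2"
    by (simp add: K_def N0_def L_def power2_eq_square mult.assoc)
qed


definition Mv :: "real \<Rightarrow> real \<Rightarrow> real \<Rightarrow> real" where
  "Mv m N0 v = (if N0 = 0 then \<bar>v\<bar> powr (1/(2*m+2)) else min (\<bar>v\<bar> powr (1/(2*m+2))) (sqrt \<bar>v\<bar> / N0 powr m))"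

lemma Mv_nonneg: "0 \<le> Mv m N0 v"
  by (simp add: Mv_def)

lemma Mv_le_A: "Mv m N0 v \<le> \<bar>v\<bar> powr (1/(2*m+2))"
  by (simp add: Mv_def)

lemma B_eq:
  assumes m: "m \<ge> 1" and N: "N0 > 0"
  shows "sqrt \<bar>v\<bar> / N0 powr m = \<bar>v\<bar> powr (1/(2*m+2)) * (\<bar>v\<bar> powr (1/(2*m+2)) / N0) powr m"
proof -
  define A where "A = \<bar>v\<bar> powr (1/(2*m+2))"
  have "A powr (m+1) = \<bar>v\<bar> powr ((1/(2*m+2)) * (m+1))" by (simp add: A_def powr_powr)
  also have "(1/(2*m+2)) * (m+1) = 1/2" using m by (simp add: field_simps)
  also have "\<bar>v\<bar> powr (1/2) = sqrt \<bar>v\<bar>" by (simp add: powr_half_sqrt)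
  finally have "sqrt \<bar>v\<bar> = A powr (m+1)" ..
  also have "\<dots> = A * A powr m" by (simp add: powr_add A_def)
  finally show ?thesis using N by (simp add: A_def powr_divide)
qed

lemma A_le_N_imp:
  assumes m: "m \<ge> 1" and N: "N0 > 0" and le: "\<bar>v\<bar> powr (1/(2*m+2)) \<le> N0"
  shows "sqrt \<bar>v\<bar> / N0 powr m \<le> \<bar>v\<bar> powr (1/(2*m+2))"
proof -
  have "(\<bar>v\<bar> powr (1/(2*m+2)) / N0) powr m \<le> 1"
    using le N m by (intro powr_le1) (auto simp: divide_le_eq_1)
  then show ?thesis unfolding B_eq[OF m N]
    by (simp add: mult_left_le)
qed

lemma N_le_A_imp:
  assumes m: "m \<ge> 1" and N: "N0 > 0" and le: "N0 \<le> \<bar>v\<bar> powr (1/(2*m+2))"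
  shows "\<bar>v\<bar> powr (1/(2*m+2)) \<le> sqrt \<bar>v\<bar> / N0 powr m"
proof -
  have "1 \<le> (\<bar>v\<bar> powr (1/(2*m+2)) / N0) powr m"
    using le N m by (intro ge_one_powr_ge_zero) auto
  then show ?thesis unfolding B_eq[OF m N]
    by (simp add: mult_le_cancel_left1)
qed

lemma A_le_Mv_N:
  assumes m: "m \<ge> 1" and N: "N0 \<ge> 0"
  shows "\<bar>v\<bar> powr (1/(2*m+2)) \<le> Mv m N0 v + N0"
proof (cases "N0 = 0")
  case True then show ?thesis by (simp add: Mv_def)
next
  case False
  then have Np: "N0 > 0" using N by simp
  show ?thesis
  proof (cases "\<bar>v\<bar> powr (1/(2*m+2)) \<le> N0")
    case True then show ?thesis using Mv_nonneg[of m N0 v] by linarith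
  next
    case False
    then have "\<bar>v\<bar> powr (1/(2*m+2)) \<le> sqrt \<bar>v\<bar> / N0 powr m" using N_le_A_imp[OF m Np] by simp
    then have "Mv m N0 v = \<bar>v\<bar> powr (1/(2*m+2))" using Np by (simp add: Mv_def)
    then show ?thesis using N by simp
  qed
qed

lemma powr_sum_le:
  fixes x y e :: real
  assumes "0 \<le> x" "0 \<le> y" "0 \<le> e" "e \<le> 1"
  shows "(x + y) powr e \<le> 2 * (x powr e + y powr e)"
proof -
  have "(x + y) powr e \<le> (2 * max x y) powr e" using assms by (intro powr_mono2) auto
  also have "\<dots> = 2 powr e * max x y powr e" using assms by (simp add: powr_mult)
  also have "2 powr e \<le> 2 powr 1" using assms by (intro powr_mono) auto
  then have "2 powr e * max x y powr e \<le> 2 * max x y powr e" by (simp add: mult_right_mono)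
  also have "max x y powr e \<le> x powr e + y powr e" by (simp add: max_def)
  finally show ?thesis by simp
qed

lemma powr_le_self:
  fixes c e :: real
  assumes "1 \<le> c" "0 \<le> e" "e \<le> 1"
  shows "c powr e \<le> c"
  using powr_mono[of e 1 c] assms by simp

lemma lower_real:
  fixes m L N0 v h :: real
  assumes m: "m \<ge> 1" and L: "0 \<le> L" and N: "0 \<le> N0"
    and v: "\<bar>v\<bar> \<le> (2*m+1) * (N0 + L) powr (2*m) * L\<^sup>2"
  shows "Mv m N0 v \<le> (2*m+1) * 2 powr (2*m) * L"
proof -
  define c where "c = (2*m+1) * 2 powr (2*m)"
  define n where "n = 2*m+2"
  have c1: "1 \<le> c"
  proof -
    have "1 \<le> 2 powr (2*m)" using m by (intro ge_one_powr_ge_zero) auto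
    moreover have "1 \<le> 2*m+1" using m by simp
    ultimately show ?thesis unfolding c_def using mult_mono[of 1 "2*m+1" 1 "2 powr (2*m)"] by simp
  qed
  have np: "n > 0" using m by (simp add: n_def)
  show ?thesis
  proof (cases "N0 \<le> L")
    case True
    have "(N0 + L) powr (2*m) \<le> (2 * L) powr (2*m)" using True N m by (intro powr_mono2) auto
    also have "\<dots> = 2 powr (2*m) * L powr (2*m)" using L by (simp add: powr_mult)
    finally have "\<bar>v\<bar> \<le> (2*m+1) * (2 powr (2*m) * L powr (2*m)) * L\<^sup>2"
      using v m by (smt (verit) mult_left_mono mult_right_mono zero_le_power2)
    also have "\<dots> = c * (L powr (2*m) * L powr 2)" using L by (simp add: c_def)
    also have "L powr (2*m) * L powr 2 = L powr n" by (simp add: n_def powr_add)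
    finally have vle: "\<bar>v\<bar> \<le> c * L powr n" .
    have "\<bar>v\<bar> powr (1/n) \<le> (c * L powr n) powr (1/n)" using vle np by (intro powr_mono2) auto
    also have "\<dots> = c powr (1/n) * L" using np L c1 by (simp add: powr_mult powr_powr)
    also have "c powr (1/n) \<le> c" using c1 np m by (intro powr_le_self) (auto simp: n_def)
    then have "c powr (1/n) * L \<le> c * L" using L by (simp add: mult_right_mono)
    finally show ?thesis using Mv_le_A[of m N0 v] by (simp add: c_def n_def)
  next
    case False
    then have Np: "N0 > 0" using L by simp
    have "(N0 + L) powr (2*m) \<le> (2 * N0) powr (2*m)" using False N m L by (intro powr_mono2) auto
    also have "\<dots> = 2 powr (2*m) * N0 powr (2*m)" using N by (simp add: powr_mult)
    finally have "\<bar>v\<bar> \<le> (2*m+1) * (2 powr (2*m) * N0 powr (2*m)) * L\<^sup>2"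
      using v m by (smt (verit) mult_left_mono mult_right_mono zero_le_power2)
    also have "\<dots> = c * (N0 powr m)\<^sup>2 * L\<^sup>2" by (simp add: c_def power2_eq_square flip: powr_add)
    finally have "sqrt \<bar>v\<bar> \<le> sqrt (c * (N0 powr m)\<^sup>2 * L\<^sup>2)" by (rule real_sqrt_le_mono)
    also have "\<dots> = sqrt c * N0 powr m * L" using L by (simp add: real_sqrt_mult)
    finally have "sqrt \<bar>v\<bar> / N0 powr m \<le> sqrt c * L" using Np by (simp add: divide_le_eq mult.commute mult.left_commute)
    also have "sqrt c \<le> c" using powr_le_self[OF c1, of "1/2"] c1 by (simp add: powr_half_sqrt)
    then have "sqrt c * L \<le> c * L" using L by (simp add: mult_right_mono)
    finally have "sqrt \<bar>v\<bar> / N0 powr m \<le> c * L" .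
    moreover have "Mv m N0 v \<le> sqrt \<bar>v\<bar> / N0 powr m" using Np by (simp add: Mv_def)
    ultimately show ?thesis by (simp add: c_def)
  qed
qed


definition C2 :: "real \<Rightarrow> real" where
  "C2 m = 120 * 2 powr m * (2 + (2*m+1) * 3 powr (2*m))"

lemma upper_real:
  fixes m h N0 rho u v l2 :: real
  assumes m: "m \<ge> 1" and h: "0 \<le> h" and N: "0 \<le> N0" and rho: "0 \<le> rho" and r1: "N0 \<le> rho + h"
    and u: "\<bar>u\<bar> \<le> \<bar>v\<bar> + (2*m+1) * (N0 + h) powr (2*m) * h\<^sup>2"
    and l1: "l2 \<le> 60 * \<bar>u\<bar> powr (1/(2*m+2))"
    and lb: "rho > 0 \<longrightarrow> l2 \<le> 60 * sqrt \<bar>u\<bar> / rho powr m"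
  shows "l2 \<le> C2 m * (h + Mv m N0 v)"
proof -
  define c where "c = (2*m+1) * 3 powr (2*m)"
  define n where "n = 2*m+2"
  define P where "P = 2 powr m"
  define A where "A = \<bar>v\<bar> powr (1/n)"
  have c1: "1 \<le> c"
  proof -
    have "1 \<le> 3 powr (2*m)" using m by (intro ge_one_powr_ge_zero) auto
    moreover have "1 \<le> 2*m+1" using m by simp
    ultimately show ?thesis unfolding c_def using mult_mono[of 1 "2*m+1" 1 "3 powr (2*m)"] by simp
  qed
  have P1: "1 \<le> P" unfolding P_def using m by (intro ge_one_powr_ge_zero) auto
  have np: "n > 0" using m by (simp add: n_def)
  have C2e: "C2 m = 120 * P * (2 + c)" by (simp add: C2_def P_def c_def)
  have Mv0: "0 \<le> Mv m N0 v" by (rule Mv_nonneg)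
  show ?thesis
  proof (cases "N0 \<le> 2 * h")
    case True
    have "(N0 + h) powr (2*m) \<le> (3 * h) powr (2*m)" using True N m by (intro powr_mono2) auto
    also have "\<dots> = 3 powr (2*m) * h powr (2*m)" using h by (simp add: powr_mult)
    finally have "(2*m+1) * (N0 + h) powr (2*m) * h\<^sup>2 \<le> (2*m+1) * (3 powr (2*m) * h powr (2*m)) * h\<^sup>2"
      using m by (intro mult_right_mono mult_left_mono) auto
    also have "\<dots> = c * (h powr (2*m) * h powr 2)" using h by (simp add: c_def)
    also have "h powr (2*m) * h powr 2 = h powr n" by (simp add: n_def powr_add)
    finally have ule: "\<bar>u\<bar> \<le> \<bar>v\<bar> + c * h powr n" using u by linarith
    have "\<bar>u\<bar> powr (1/n) \<le> (\<bar>v\<bar> + c * h powr n) powr (1/n)" using ule np by (intro powr_mono2) auto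
    also have "\<dots> \<le> 2 * (A + (c * h powr n) powr (1/n))"
      unfolding A_def using c1 np m by (intro powr_sum_le) (auto simp: n_def)
    also have "(c * h powr n) powr (1/n) = c powr (1/n) * h" using np h c1 by (simp add: powr_mult powr_powr)
    also have "c powr (1/n) \<le> c" using c1 np m by (intro powr_le_self) (auto simp: n_def)
    then have "c powr (1/n) * h \<le> c * h" using h by (simp add: mult_right_mono)
    finally have a1: "\<bar>u\<bar> powr (1/n) \<le> 2 * (A + c * h)" by simp
    have "A \<le> Mv m N0 v + N0" unfolding A_def n_def by (rule A_le_Mv_N[OF m N])
    then have "\<bar>u\<bar> powr (1/n) \<le> 2 * (Mv m N0 v + (2 + c) * h)" using a1 True by (simp add: algebra_simps)
    then have l2a: "l2 \<le> 120 * (Mv m N0 v + (2 + c) * h)" using l1 by (simp add: n_def)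
    have Q2: "2 + c \<le> P * (2 + c)" using mult_right_mono[OF P1, of "2+c"] c1 by simp
    have Q: "1 \<le> P * (2 + c)" "2 + c \<le> P * (2 + c)" using Q2 c1 by linarith+
    have "Mv m N0 v + (2 + c) * h \<le> P * (2 + c) * Mv m N0 v + P * (2 + c) * h"
      using mult_right_mono[OF Q(1) Mv0] mult_right_mono[OF Q(2) h] by linarith
    then show ?thesis using l2a unfolding C2e by (simp add: algebra_simps)
  next
    case False
    then have Np: "N0 > 0" using h by linarith
    have rp: "rho > 0" "N0 / 2 \<le> rho" using r1 False h by auto
    have Ele: "(2*m+1) * (N0 + h) powr (2*m) * h\<^sup>2 \<le> c * (N0 powr m)\<^sup>2 * h\<^sup>2"
    proof -
      have "(N0 + h) powr (2*m) \<le> (3 * N0) powr (2*m)" using False N m h by (intro powr_mono2) auto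
      also have "\<dots> = 3 powr (2*m) * (N0 powr m)\<^sup>2" using N by (simp add: powr_mult power2_eq_square flip: powr_add)
      finally have "(N0 + h) powr (2*m) \<le> 3 powr (2*m) * (N0 powr m)\<^sup>2" .
      then have "(2*m+1) * (N0 + h) powr (2*m) * h\<^sup>2 \<le> (2*m+1) * (3 powr (2*m) * (N0 powr m)\<^sup>2) * h\<^sup>2"
        using m by (intro mult_right_mono mult_left_mono) auto
      then show ?thesis unfolding c_def by (simp add: mult.assoc)
    qed
    define B where "B = sqrt \<bar>v\<bar> / N0 powr m"
    have B0: "0 \<le> B" by (simp add: B_def)
    have A0: "0 \<le> A" by (simp add: A_def)
    have lB: "l2 \<le> C2 m * (h + B)"
    proof -
      have "sqrt \<bar>u\<bar> \<le> sqrt (\<bar>v\<bar> + c * (N0 powr m)\<^sup>2 * h\<^sup>2)" using u Ele by (intro real_sqrt_le_mono) linarith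
      also have "\<dots> \<le> sqrt \<bar>v\<bar> + sqrt (c * (N0 powr m)\<^sup>2 * h\<^sup>2)" using c1 by (intro sqrt_add_le_add_sqrt) auto
      also have "sqrt (c * (N0 powr m)\<^sup>2 * h\<^sup>2) = sqrt c * N0 powr m * h" using h by (simp add: real_sqrt_mult)
      finally have su: "sqrt \<bar>u\<bar> \<le> sqrt \<bar>v\<bar> + sqrt c * N0 powr m * h" .
      have "(N0 / 2) powr m \<le> rho powr m" using rp N m by (intro powr_mono2) auto
      then have rh: "N0 powr m / P \<le> rho powr m" using N by (simp add: P_def powr_divide)
      have Nm: "N0 powr m > 0" using Np by simp
      have "sqrt \<bar>u\<bar> / rho powr m \<le> sqrt \<bar>u\<bar> / (N0 powr m / P)"
        using rh Nm P1 rp(1) by (intro divide_left_mono) auto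
      also have "\<dots> = P * (sqrt \<bar>u\<bar> / N0 powr m)" by simp
      also have "sqrt \<bar>u\<bar> / N0 powr m \<le> B + sqrt c * h"
        using su Nm by (simp add: B_def divide_le_eq algebra_simps)
      then have "P * (sqrt \<bar>u\<bar> / N0 powr m) \<le> P * (B + sqrt c * h)" using P1 by (intro mult_left_mono) auto
      finally have "sqrt \<bar>u\<bar> / rho powr m \<le> P * (B + sqrt c * h)" .
      moreover have "sqrt c \<le> c" using powr_le_self[OF c1, of "1/2"] c1 by (simp add: powr_half_sqrt)
      ultimately have "sqrt \<bar>u\<bar> / rho powr m \<le> P * (B + c * h)"
      proof -
        assume a: "sqrt \<bar>u\<bar> / rho powr m \<le> P * (B + sqrt c * h)" and b: "sqrt c \<le> c"
        have "sqrt c * h \<le> c * h" using b h by (rule mult_right_mono)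
        then have "P * (B + sqrt c * h) \<le> P * (B + c * h)" using P1 by (intro mult_left_mono) auto
        then show ?thesis using a by linarith
      qed
      moreover have "60 * sqrt \<bar>u\<bar> / rho powr m = 60 * (sqrt \<bar>u\<bar> / rho powr m)" by simp
      ultimately have "l2 \<le> 60 * (P * (B + c * h))" using lb rp by linarith
      also have "\<dots> \<le> 120 * P * (2 + c) * (h + B)"
      proof -
        have "B + c * h \<le> (2 + c) * (h + B)" using B0 h c1 by (simp add: algebra_simps)
        then have "P * (B + c * h) \<le> P * ((2 + c) * (h + B))" using P1 by (simp add: mult_left_mono)
        then show ?thesis using P1 B0 h c1 by (simp add: algebra_simps)
      qed
      finally show ?thesis unfolding C2e .
    qed
    have lA: "l2 \<le> C2 m * (h + A)"
    proof (cases "A \<le> N0")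
      case True
      then have "B \<le> A" using A_le_N_imp[OF m Np] by (simp add: A_def B_def n_def)
      moreover have "0 \<le> C2 m" using C2e P1 c1 by simp
      ultimately have "C2 m * (h + B) \<le> C2 m * (h + A)" by (intro mult_left_mono) auto
      then show ?thesis using lB by linarith
    next
      case False
      have Nn: "N0 powr n \<le> \<bar>v\<bar>"
      proof -
        have "N0 powr n \<le> A powr n" using False N np by (intro powr_mono2) auto
        also have "A powr n = \<bar>v\<bar>" using np by (simp add: A_def powr_powr)
        finally show ?thesis .
      qed
      have e: "(N0 powr m)\<^sup>2 * N0\<^sup>2 = N0 powr n" using N by (simp add: n_def power2_eq_square flip: powr_add) (simp add: powr_add power2_eq_square)
      have "(N0 powr m)\<^sup>2 * h\<^sup>2 \<le> (N0 powr m)\<^sup>2 * N0\<^sup>2"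
        using h \<open>\<not> N0 \<le> 2 * h\<close> by (intro mult_left_mono power_mono) auto
      then have "c * ((N0 powr m)\<^sup>2 * h\<^sup>2) \<le> c * N0 powr n" unfolding e using c1 by (intro mult_left_mono) auto
      then have "c * (N0 powr m)\<^sup>2 * h\<^sup>2 \<le> c * N0 powr n" by (simp add: mult.assoc)
      also have "\<dots> \<le> c * \<bar>v\<bar>" using Nn c1 by simp
      finally have "c * (N0 powr m)\<^sup>2 * h\<^sup>2 \<le> c * \<bar>v\<bar>" .
      then have "\<bar>u\<bar> \<le> (1 + c) * \<bar>v\<bar>" using u Ele by (simp add: algebra_simps)
      then have "\<bar>u\<bar> powr (1/n) \<le> ((1 + c) * \<bar>v\<bar>) powr (1/n)" using np by (intro powr_mono2) auto
      also have "\<dots> = (1 + c) powr (1/n) * A" using c1 by (simp add: powr_mult A_def)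
      also have "(1 + c) powr (1/n) \<le> 1 + c" using c1 np m by (intro powr_le_self) (auto simp: n_def)
      then have "(1 + c) powr (1/n) * A \<le> (1 + c) * A" using A0 by (simp add: mult_right_mono)
      finally have "l2 \<le> 60 * ((1 + c) * A)" using l1 by (simp add: n_def)
      also have "\<dots> \<le> 120 * P * (2 + c) * (h + A)"
      proof -
        have "(1 + c) * A \<le> (2 + c) * (h + A)" using A0 h c1 by (simp add: algebra_simps)
        also have "\<dots> \<le> P * ((2 + c) * (h + A))"
          using mult_right_mono[OF P1, of "(2 + c) * (h + A)"] A0 h c1 by simp
        finally have X: "(1 + c) * A \<le> P * ((2 + c) * (h + A))" .
        have "0 \<le> P * ((2 + c) * (h + A))" using P1 c1 h A0 by simp
        moreover have "120 * P * (2 + c) * (h + A) = 120 * (P * ((2 + c) * (h + A)))" by (simp add: algebra_simps)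
        ultimately show ?thesis using X by linarith
      qed
      finally show ?thesis unfolding C2e .
    qed
    have "Mv m N0 v = min A B" using Np by (simp add: Mv_def A_def B_def n_def)
    then show ?thesis using lA lB by (simp add: min_def)
  qed
qed


lemma hlength_nonneg:
  assumes "horizontal m \<gamma> a b"
  shows "0 \<le> hlength a b"
proof -
  have "a absolutely_integrable_on {0..1}" "b absolutely_integrable_on {0..1}"
    using assms unfolding horizontal_def by blast+
  from norm_int[OF this] show ?thesis
    unfolding hlength_def by (intro integral_nonneg) auto
qed

lemma mono_E:
  fixes m N0 L l :: real
  assumes "m \<ge> 1" "0 \<le> N0" "0 \<le> L" "L \<le> l"
  shows "(2*m+1) * (N0 + L) powr (2*m) * L\<^sup>2 \<le> (2*m+1) * (N0 + l) powr (2*m) * l\<^sup>2"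
proof -
  have "(N0 + L) powr (2*m) \<le> (N0 + l) powr (2*m)" using assms by (intro powr_mono2) auto
  moreover have "L\<^sup>2 \<le> l\<^sup>2" using assms by (intro power_mono) auto
  ultimately have "(N0 + L) powr (2*m) * L\<^sup>2 \<le> (N0 + l) powr (2*m) * l\<^sup>2"
    by (intro mult_mono) auto
  then show ?thesis using assms by (simp add: mult.assoc mult_left_mono)
qed

lemma reach_LB:
  assumes m: "m \<ge> 1" and r: "reach m (x0, y0, t0) (xi, eta, tau) l"
  shows "\<bar>tau - t0 + norm (x0, y0) powr (2*m) * omega (x0, y0) (xi, eta)\<bar>
           \<le> (2*m+1) * (norm (x0, y0) + l) powr (2*m) * l\<^sup>2"
proof -
  obtain \<gamma> a b where h: "horizontal m \<gamma> a b" "\<gamma> 0 = (x0, y0, t0)" "\<gamma> 1 = (xi, eta, tau)" "hlength a b \<le> l"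
    using r unfolding reach_def by blast
  have "\<bar>tau - t0 + norm (x0, y0) powr (2*m) * omega (x0, y0) (xi, eta)\<bar>
           \<le> (2*m+1) * (norm (x0, y0) + hlength a b) powr (2*m) * (hlength a b)\<^sup>2"
    by (rule LB(2)[OF m h(1-3)])
  also have "\<dots> \<le> (2*m+1) * (norm (x0, y0) + l) powr (2*m) * l\<^sup>2"
    using hlength_nonneg[OF h(1)] h(4) m by (intro mono_E) auto
  finally show ?thesis .
qed

lemma delta_eq:
  "delta m (x, y, t) (xi, eta, tau) = norm ((x, y) - (xi, eta)) +
     Mv m (norm (x, y)) (tau - t + norm (x, y) powr (2*m) * omega (x, y) (xi, eta))"
  by (simp add: delta_def zabs_norm Mv_def Let_def)

theorem theorem1p3:
  fixes m :: real
  assumes "m \<ge> 1"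
  shows "\<exists>C>1. \<forall>p q. delta m p q / C \<le> cc_dist m p q \<and> cc_dist m p q \<le> C * delta m p q"
proof -
  have m: "m \<ge> 1" by (rule assms)
  define c1 where "c1 = (2*m+1) * 2 powr (2*m)"
  define C where "C = 2 + C2 m + c1"
  have c10: "0 \<le> c1" unfolding c1_def using m by (intro mult_nonneg_nonneg) auto
  have C20: "0 \<le> C2 m" unfolding C2_def using m by (intro mult_nonneg_nonneg add_nonneg_nonneg) auto
  have C1: "C > 1" using c10 C20 by (simp add: C_def)
  show ?thesis
  proof (intro exI[of _ C] conjI allI C1)
    fix p q :: "real \<times> real \<times> real"
    obtain x y t where p: "p = (x, y, t)" by (cases p) auto
    obtain xi eta tau where q: "q = (xi, eta, tau)" by (cases q) auto
    define N0 where "N0 = norm (x, y)"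
    define h where "h = norm ((x, y) - (xi, eta))"
    define v where "v = tau - t + N0 powr (2*m) * omega (x, y) (xi, eta)"
    define S where "S = {hlength a b | \<gamma> a b. horizontal m \<gamma> a b \<and> \<gamma> 0 = p \<and> \<gamma> 1 = q}"
    have cc: "cc_dist m p q = Inf S" by (simp add: cc_dist_def S_def)
    have de: "delta m p q = h + Mv m N0 v" by (simp add: p q delta_eq N0_def h_def v_def)
    have N0p: "0 \<le> N0" "0 \<le> h" by (simp_all add: N0_def h_def)
    have dpos: "0 \<le> delta m p q" using de N0p Mv_nonneg[of m N0 v] by simp
    have bdd: "bdd_below S" unfolding S_def bdd_below_def using hlength_nonneg by blast
    define t1 where "t1 = t + integral {0..1} (liftF m (\<lambda>s. (x, y) + s *\<^sub>R ((xi, eta) - (x, y))) (\<lambda>s. (xi, eta) - (x, y)))"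
    have r1: "reach m (x, y, t) (xi, eta, t1) h"
    proof -
      have m0: "m > 0" using m by simp
      have hn: "norm ((xi, eta) - (x, y)) = h" unfolding h_def by (rule norm_minus_commute)
      have "reach m (x, y, t) (xi, eta, t1) (norm ((xi, eta) - (x, y)))"
        using seg_general[OF m0, of "(x, y)" t "(xi, eta)"] unfolding t1_def fst_conv snd_conv .
      then show ?thesis unfolding hn .
    qed
    have E: "\<bar>t1 - t + N0 powr (2*m) * omega (x, y) (xi, eta)\<bar> \<le> (2*m+1) * (N0 + h) powr (2*m) * h\<^sup>2"
      using reach_LB[OF m r1] by (simp add: N0_def)
    obtain l2 where l2: "reach m (xi, eta, t1) (xi, eta, t1 + (tau - t1)) l2"
      "l2 \<le> 60 * \<bar>tau - t1\<bar> powr (1/(2*m+2))"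
      "norm (xi, eta) > 0 \<longrightarrow> l2 \<le> 60 * sqrt \<bar>tau - t1\<bar> / norm (xi, eta) powr m"
      using loop[OF m, of "(xi, eta)" t1 "tau - t1"] by auto
    have r: "reach m p q (h + l2)" using reach_trans[OF r1 l2(1)] by (simp add: p q)
    have ub: "l2 \<le> C2 m * (h + Mv m N0 v)"
    proof (rule upper_real[OF m N0p(2) N0p(1) _ _ _ l2(2) l2(3)])
      show "0 \<le> norm (xi, eta)" by simp
      show "N0 \<le> norm (xi, eta) + h"
        using norm_triangle_ineq[of "(xi, eta)" "(x, y) - (xi, eta)"] by (simp add: N0_def h_def)
      have "\<bar>tau - t1\<bar> \<le> \<bar>v\<bar> + \<bar>t1 - t + N0 powr (2*m) * omega (x, y) (xi, eta)\<bar>"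
        unfolding v_def by linarith
      then show "\<bar>tau - t1\<bar> \<le> \<bar>v\<bar> + (2*m+1) * (N0 + h) powr (2*m) * h\<^sup>2" using E by linarith
    qed
    obtain \<gamma> a b where g: "horizontal m \<gamma> a b" "\<gamma> 0 = p" "\<gamma> 1 = q" "hlength a b \<le> h + l2"
      using r unfolding reach_def by blast
    have inS: "hlength a b \<in> S" unfolding S_def using g by blast
    then have Sne: "S \<noteq> {}" by blast
    have "cc_dist m p q \<le> hlength a b" unfolding cc by (rule cInf_lower[OF inS bdd])
    also have "\<dots> \<le> h + C2 m * (h + Mv m N0 v)" using g(4) ub by linarith
    also have "\<dots> \<le> C * delta m p q"
    proof -
      have "h + C2 m * (h + Mv m N0 v) \<le> (1 + C2 m) * (h + Mv m N0 v)"
        using Mv_nonneg[of m N0 v] by (simp add: algebra_simps)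
      also have "\<dots> \<le> C * (h + Mv m N0 v)"
        using c10 N0p Mv_nonneg[of m N0 v] by (intro mult_right_mono) (auto simp: C_def)
      finally show ?thesis using de by simp
    qed
    finally show "cc_dist m p q \<le> C * delta m p q" .
    have "delta m p q / C \<le> L" if L: "L \<in> S" for L
    proof -
      obtain \<gamma> a b where g: "horizontal m \<gamma> a b" "\<gamma> 0 = (x, y, t)" "\<gamma> 1 = (xi, eta, tau)" "L = hlength a b"
        using L unfolding S_def p q by blast
      have L0: "0 \<le> L" using hlength_nonneg[OF g(1)] g(4) by simp
      have hL: "h \<le> L" using LB(1)[OF m g(1-3)] g(4) by (simp add: h_def)
      have vb: "\<bar>v\<bar> \<le> (2*m+1) * (N0 + L) powr (2*m) * L\<^sup>2"
        using LB(2)[OF m g(1-3)] g(4) by (simp add: v_def N0_def)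
      have "Mv m N0 v \<le> c1 * L" unfolding c1_def by (rule lower_real[OF m L0 N0p(1) vb])
      then have "delta m p q \<le> (1 + c1) * L" using de hL by (simp add: algebra_simps)
      also have "\<dots> \<le> C * L" using L0 C20 by (intro mult_right_mono) (auto simp: C_def)
      finally show ?thesis using C1 by (simp add: divide_le_eq mult.commute)
    qed
    then show "delta m p q / C \<le> cc_dist m p q" unfolding cc by (intro cInf_greatest[OF Sne]) auto
  qed
qed


end
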